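(* Let $0<A,B\le1$ with $L(A,B)<R(A,B)$. Then for $U\in[L(A,B),R(A,B)]$, \[ \frac1\pi G'_{A,B}(U)=(A+B)\sin(\pi U)+B\kappa\sin(\pi M(U))+A\varepsilon\sin(\pi N(U)), \] and $G_{A,B}$ is strictly increasing on $[L(A,B),R(A,B)]$.
   Context: For $0<A,B\le1$ put $\kappa=\sqrt{1-A^2}$, $\varepsilon=\sqrt{1-B^2}$, $P=P(A,B)=\frac{1+AB}{B(A+B)}$, $M(U)=\kappa(P-U)$, $N(U)=\varepsilon\left(U+\frac{\kappa^2}{A(A+B)}\right)$, and $G_{A,B}(U)=B\cos(\pi M(U))-A\cos(\pi N(U))-(A+B)\cos(\pi U)$. Further $L(A,B)=\frac{\kappa}{1+\kappa}\frac{1+AB}{B(A+B)}$ and $R(A,B)=\frac{1-\varepsilon\kappa^2/[A(A+B)]}{1+\varepsilon}$. *)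

theory Defs
  imports "HOL-Analysis.Analysis"
begin

definition kap :: "real \<Rightarrow> real" where "kap A = sqrt (1 - A^2)"
definition eps :: "real \<Rightarrow> real" where "eps B = sqrt (1 - B^2)"
definition PP :: "real \<Rightarrow> real \<Rightarrow> real" where "PP A B = (1 + A*B) / (B*(A+B))"
definition MM :: "real \<Rightarrow> real \<Rightarrow> real \<Rightarrow> real" where
  "MM A B U = kap A * (PP A B - U)"
definition NN :: "real \<Rightarrow> real \<Rightarrow> real \<Rightarrow> real" where
  "NN A B U = eps B * (U + (kap A)^2 / (A*(A+B)))"
definition GG :: "real \<Rightarrow> real \<Rightarrow> real \<Rightarrow> real" where
  "GG A B U = B * cos (pi * MM A B U) - A * cos (pi * NN A B U) - (A+B) * cos (pi * U)"
definition LL :: "real \<Rightarrow> real \<Rightarrow> real" where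
  "LL A B = kap A / (1 + kap A) * ((1 + A*B) / (B*(A+B)))"
definition RR :: "real \<Rightarrow> real \<Rightarrow> real" where
  "RR A B = (1 - eps B * (kap A)^2 / (A*(A+B))) / (1 + eps B)"

end

theory Submission
  imports Defs
begin

lemma GG_deriv:
  "(GG A B has_real_derivative
      pi * ((A+B) * sin (pi*U) + B * kap A * sin (pi * MM A B U)
            + A * eps B * sin (pi * NN A B U))) (at U)"
  unfolding GG_def MM_def NN_def
  by (rule derivative_eq_intros refl | simp)+ (simp add: algebra_simps)

theorem lemma3p3:
  fixes A B :: real
  assumes "0 < A" "A \<le> 1" "0 < B" "B \<le> 1" "LL A B < RR A B"
  shows "(\<forall>U \<in> {LL A B..RR A B}.
           (GG A B has_real_derivative
              pi * ((A+B) * sin (pi*U) + B * kap A * sin (pi * MM A B U)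
                    + A * eps B * sin (pi * NN A B U))) (at U))
         \<and> strict_mono_on {LL A B..RR A B} (GG A B)"
proof -
  define k where "k = kap A"
  define e where "e = eps B"
  define P where "P = PP A B"
  define c where "c = k^2 / (A*(A+B))"
  have k0: "k \<ge> 0" unfolding k_def kap_def using assms by (simp add: power_le_one)
  have e0: "e \<ge> 0" unfolding e_def eps_def using assms by (simp add: power_le_one)
  have c0: "c \<ge> 0" unfolding c_def using assms by simp
  have P1: "P \<ge> 1" unfolding P_def PP_def using assms
  proof -
    have "B*(A+B) \<le> 1 + A*B" using assms
      by (simp add: algebra_simps) (metis mult_le_one less_imp_le)
    then show "(1 + A*B) / (B*(A+B)) \<ge> 1" using assms by simp
  qed
  have L: "LL A B = k/(1+k)*P" unfolding LL_def k_def P_def PP_def by simp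
  have R: "RR A B = (1 - e*c)/(1+e)" unfolding RR_def e_def c_def k_def by simp
  have L0: "LL A B \<ge> 0" using L k0 P1 by simp
  have R1: "RR A B \<le> 1"
  proof -
    have "1 - e*c \<le> 1 + e" using e0 c0 mult_nonneg_nonneg[OF e0 c0] by linarith
    then show ?thesis using R e0 by simp
  qed
  have pos: "pi * ((A+B) * sin (pi*U) + B * kap A * sin (pi * MM A B U)
                    + A * eps B * sin (pi * NN A B U)) > 0"
    if U: "LL A B < U" "U < RR A B" for U
  proof -
    have U01: "0 < U" "U < 1" using U L0 R1 by auto
    have "U*(1+k) \<ge> k*P" using U(1) L k0 by (simp add: field_simps)
    hence Mle: "MM A B U \<le> U" unfolding MM_def k_def[symmetric] P_def[symmetric]
      by (simp add: algebra_simps)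
    have M0: "MM A B U \<ge> 0" unfolding MM_def k_def[symmetric] P_def[symmetric]
      using k0 P1 U01 by simp
    have "U*(1+e) \<le> 1 - e*c" using U(2) R e0 by (simp add: field_simps)
    hence Nle: "NN A B U \<le> 1" unfolding NN_def k_def[symmetric] e_def[symmetric] c_def[symmetric]
      using U01 e0 by (simp add: algebra_simps)
    have N0: "NN A B U \<ge> 0" unfolding NN_def k_def[symmetric] e_def[symmetric] c_def[symmetric]
      using U01 e0 c0 by simp
    have s1: "sin (pi*U) > 0" using U01 by (intro sin_gt_zero) auto
    have s2: "sin (pi * MM A B U) \<ge> 0" using Mle M0 U01 by (intro sin_ge_zero) auto
    have s3: "sin (pi * NN A B U) \<ge> 0" using Nle N0 by (intro sin_ge_zero) auto
    have "(A+B) * sin (pi*U) > 0" using s1 assms by simp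
    moreover have "B * kap A * sin (pi * MM A B U) \<ge> 0" using s2 k0 assms k_def by simp
    moreover have "A * eps B * sin (pi * NN A B U) \<ge> 0" using s3 e0 assms e_def by simp
    ultimately show ?thesis by simp
  qed
  have mono: "strict_mono_on {LL A B..RR A B} (GG A B)"
  proof (rule strict_mono_onI)
    fix r s assume rs: "r \<in> {LL A B..RR A B}" "s \<in> {LL A B..RR A B}" "r < s"
    show "GG A B r < GG A B s"
    proof (rule DERIV_pos_imp_increasing_open[OF rs(3)])
      fix x assume "r < x" "x < s"
      then show "\<exists>y. (GG A B has_real_derivative y) (at x) \<and> 0 < y"
        using GG_deriv pos rs by (meson atLeastAtMost_iff le_less_trans less_le_trans)
    next
      show "continuous_on {r..s} (GG A B)"
        using GG_deriv by (meson DERIV_isCont continuous_at_imp_continuous_on)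
    qed
  qed
  show ?thesis using GG_deriv mono by blast
qed

end
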